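(* Let $(\mathcal{C},\psi)$ be a t-pair with $\operatorname{typ}(\mathcal{U}^{ii}_{\mathcal{C}\psi})\ne\alpha$. Then $\operatorname{typ}(\mathcal{U}^{id}_{\mathcal{C}\psi})=\operatorname{typ}(\mathcal{U}^{ia}_{\mathcal{C}\psi})=\epsilon$.
   Context: Let $\mathbb{N}=\{0,1,2,\dots\}$; for an integer $k\ge 2$ let $E_k=\{0,1,\dots,k-1\}$; let $\mathcal{P}(\mathbb{N})$ be the set of nonempty finite subsets of $\mathbb{N}$. Let $F$ be a nonempty set (of attribute names). A decision table $T\in\mathcal{M}_k(F)$ is a rectangular table with $n\ge 1$ columns labeled with attributes $f_1,\dots,f_n\in F$ (any two columns labeled with the same attribute are equal), whose rows are pairwise different tuples from $E_k^n$ (the set of rows may be empty), each row being labeled with a set of decisions from $\mathcal{P}(\mathbb{N})$. Write $At(T)=\{f_1,\dots,f_n\}$ and $\Delta(T)$ for the set of rows. For a word $\alpha=(f_{i_1},\delta_1)\cdots(f_{i_m},\delta_m)$ with $f_{i_j}\in At(T)$, $\delta_j\in E_k$, the subtable $T\alpha$ consists of the rows of $T$ having value $\delta_j$ in column $f_{i_j}$ for all $j$ ($T\lambda=T$ for the empty word $\lambda$). Operations on tables: (1) removal of a column from a table with at least two columns (if groups of equal rows appear, only the first row of each group, with its decision set, is kept); (2) changing of decisions: the decision sets attached to rows are replaced arbitrarily by sets from $\mathcal{P}(\mathbb{N})$; (3) permutation of columns: swap two columns together with their attribute labels; (4) duplication of columns: add a copy of a column (with its label) next to it. A set $\mathcal{C}\subseteq\mathcal{M}_k(F)$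 is a closed class if every table obtained from a table of $\mathcal{C}$ by finitely many such operations belongs to $\mathcal{C}$. A decision tree over $\mathcal{M}_k(F)$ is a finite directed tree with a root (unique node with no entering edge) and at least two nodes such that the root and the edges leaving the root are unlabeled, each worker node (neither root nor terminal) is labeled with an attribute from $F$, each edge leaving a worker node is labeled with a number from $E_k$, and each terminal node is labeled with a number from $\mathbb{N}$. For a complete path $\xi$ (root to terminal node) whose worker nodes are labeled $f_{j_1},\dots,f_{j_m}$ in order, with the edges leaving them labeled $\delta_1,\dots,\delta_m$, put $\pi(\xi)=(f_{j_1},\delta_1)\cdots(f_{j_m},\delta_m)$, $\varphi(\xi)=f_{j_1}\cdots f_{j_m}$ (both empty if $m=0$), and let $\tau(\xi)$ be the label of its terminal node. A nondeterministic decision tree for $T$ is a decision tree $\Gamma$ whose worker-node attributes lie in $At(T)$, such that $\bigcup_{\xi}\Delta(T\pi(\xi))=\Delta(T)$ (union over complete paths), and for every row $r\in\Delta(T)$ and every complete path $\xi$ with $r\in\Delta(T\pi(\xi))$, $\tau(\xi)$ belongs to the decision set of $r$. A decision tree is deterministic if exactly one edge leaves the root and the edges leaving each worker node have pairwise different labels; a deterministic decision tree for $T$ is a deterministic decision tree that is a nondeterministic decision tree for $T$. A complexity measure over $\mathcal{M}_k(F)$ is any map $\psi:F^*\to\mathbb{N}$, where $F^*$ is the set of finite words over $F$ including the empty word $\lambda$. For a tree, $\psi(\Gamma)=\max_\xi\psi(\varphi(\xi))$ over complete paths. For $T$ with columns labeled $f_1,\dots,f_n$: $\psi^i(T)=\psi(f_1\cdots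 f_n)$, $\psi^d(T)$ is the minimum complexity of a deterministic decision tree for $T$, $\psi^a(T)$ the minimum complexity of a nondeterministic decision tree for $T$. A t-pair $(\mathcal{C},\psi)$ consists of a closed class $\mathcal{C}\subseteq\mathcal{M}_k(F)$ and a complexity measure $\psi$ over $\mathcal{M}_k(F)$. For $b,c\in\{i,d,a\}$ define the partial function $\mathcal{U}^{bc}_{\mathcal{C}\psi}(n)=\max\{\psi^b(T):T\in\mathcal{C},\psi^c(T)\le n\}$ (defined iff this set is nonempty and finite). For a partial function $g:\mathbb{N}\to\mathbb{N}$ with domain $\mathrm{Dom}(g)$, let $\mathrm{Dom}^+(g)=\{n\in\mathrm{Dom}(g):g(n)\ge n\}$, $\mathrm{Dom}^-(g)=\{n\in\mathrm{Dom}(g):g(n)\le n\}$. Its type $\operatorname{typ}(g)$ is: $\alpha$ if $\mathrm{Dom}(g)$ is infinite and $g$ is bounded above; $\beta$ if $\mathrm{Dom}(g)$ is infinite, $\mathrm{Dom}^+(g)$ is finite and $g$ is unbounded above; $\gamma$ if $\mathrm{Dom}^+(g)$ and $\mathrm{Dom}^-(g)$ are both infinite; $\delta$ if $\mathrm{Dom}(g)$ is infinite and $\mathrm{Dom}^-(g)$ is finite; $\epsilon$ if $\mathrm{Dom}(g)$ is finite. *)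

theory Defs
  imports Main
begin

text \<open>A decision table over attribute type 'f: the list of column labels f_1..f_n,
  and the list of rows (in order), each row a tuple of values together with its
  decision set.  The attribute set F is the (nonempty) type 'f.\<close>

type_synonym 'f dtable = "'f list \<times> (nat list \<times> nat set) list"

definition in_Mk :: "nat \<Rightarrow> 'f dtable \<Rightarrow> bool" where
  "in_Mk k T \<longleftrightarrow>
     (let as = fst T; rs = snd T; n = length as in
       n \<ge> 1 \<and> distinct (map fst rs) \<and>
       (\<forall>(t, D) \<in> set rs. length t = n \<and> (\<forall>x \<in> set t. x < k) \<and> finite D \<and> D \<noteq> {}) \<and>
       (\<forall>i<n. \<forall>j<n. as ! i = as ! j \<longrightarrow> (\<forall>(t, D) \<in> set rs. t ! i = t ! j)))"

definition At :: "'f dtable \<Rightarrow> 'f set" where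
  "At T = set (fst T)"

definition rows :: "'f dtable \<Rightarrow> nat list set" where
  "rows T = fst ` set (snd T)"

primrec dedup :: "(nat list \<times> nat set) list \<Rightarrow> (nat list \<times> nat set) list" where
  "dedup [] = []"
| "dedup (x # rs) = x # filter (\<lambda>p. fst p \<noteq> fst x) (dedup rs)"

definition del_nth :: "nat \<Rightarrow> 'a list \<Rightarrow> 'a list" where
  "del_nth i xs = take i xs @ drop (Suc i) xs"

definition swap_nth :: "nat \<Rightarrow> nat \<Rightarrow> 'a list \<Rightarrow> 'a list" where
  "swap_nth i j xs = xs[i := xs ! j, j := xs ! i]"

definition dup_nth :: "nat \<Rightarrow> 'a list \<Rightarrow> 'a list" where
  "dup_nth i xs = take (Suc i) xs @ [xs ! i] @ drop (Suc i) xs"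

inductive op_step :: "'f dtable \<Rightarrow> 'f dtable \<Rightarrow> bool" where
  remove_col: "i < length as \<Longrightarrow> 2 \<le> length as \<Longrightarrow>
     op_step (as, rs) (del_nth i as, dedup (map (\<lambda>(t, D). (del_nth i t, D)) rs))"
| change_dec: "map fst rs' = map fst rs \<Longrightarrow> (\<forall>(t, D) \<in> set rs'. finite D \<and> D \<noteq> {}) \<Longrightarrow>
     op_step (as, rs) (as, rs')"
| perm_cols: "i < length as \<Longrightarrow> j < length as \<Longrightarrow>
     op_step (as, rs) (swap_nth i j as, map (\<lambda>(t, D). (swap_nth i j t, D)) rs)"
| dup_col: "i < length as \<Longrightarrow>
     op_step (as, rs) (dup_nth i as, map (\<lambda>(t, D). (dup_nth i t, D)) rs)"

definition closed_class :: "nat \<Rightarrow> 'f dtable set \<Rightarrow> bool" where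
  "closed_class k C \<longleftrightarrow> C \<subseteq> {T. in_Mk k T} \<and> (\<forall>T \<in> C. \<forall>T'. op_step\<^sup>*\<^sup>* T T' \<longrightarrow> T' \<in> C)"

text \<open>A non-root node: terminal (labelled with a number) or worker (labelled with an
  attribute, with its outgoing edges, each labelled by a number, to children).
  A tree is the list of children of the (unlabelled) root.\<close>

datatype 'f dnode = Term nat | Work 'f "(nat \<times> 'f dnode) list"

type_synonym 'f dtree = "'f dnode list"

fun wf_node :: "nat \<Rightarrow> 'f dnode \<Rightarrow> bool" where
  "wf_node k (Term m) = True"
| "wf_node k (Work f cs) = (cs \<noteq> [] \<and> (\<forall>p \<in> set cs. fst p < k \<and> wf_node k (snd p)))"

fun det_node :: "'f dnode \<Rightarrow> bool" where
  "det_node (Term m) = True"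
| "det_node (Work f cs) = (distinct (map fst cs) \<and> (\<forall>p \<in> set cs. det_node (snd p)))"

fun node_attrs :: "'f dnode \<Rightarrow> 'f set" where
  "node_attrs (Term m) = {}"
| "node_attrs (Work f cs) = insert f (\<Union>p \<in> set cs. node_attrs (snd p))"

text \<open>Complete paths below a node: the word pi(xi) and the terminal label tau(xi).\<close>
fun node_paths :: "'f dnode \<Rightarrow> (('f \<times> nat) list \<times> nat) list" where
  "node_paths (Term m) = [([], m)]"
| "node_paths (Work f cs) =
     concat (map (\<lambda>p. map (\<lambda>q. ((f, fst p) # fst q, snd q)) (node_paths (snd p))) cs)"

definition wf_tree :: "nat \<Rightarrow> 'f dtree \<Rightarrow> bool" where
  "wf_tree k \<Gamma> \<longleftrightarrow> \<Gamma> \<noteq> [] \<and> (\<forall>c \<in> set \<Gamma>. wf_node k c)"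

definition det_tree :: "'f dtree \<Rightarrow> bool" where
  "det_tree \<Gamma> \<longleftrightarrow> length \<Gamma> = 1 \<and> (\<forall>c \<in> set \<Gamma>. det_node c)"

definition tree_attrs :: "'f dtree \<Rightarrow> 'f set" where
  "tree_attrs \<Gamma> = (\<Union>c \<in> set \<Gamma>. node_attrs c)"

definition tree_paths :: "'f dtree \<Rightarrow> (('f \<times> nat) list \<times> nat) list" where
  "tree_paths \<Gamma> = concat (map node_paths \<Gamma>)"

text \<open>Delta(T alpha): rows of T having value delta in (every/any) column labelled f,
  for each pair (f, delta) of alpha.\<close>
definition subrows :: "'f dtable \<Rightarrow> ('f \<times> nat) list \<Rightarrow> nat list set" where
  "subrows T \<alpha> = {t \<in> rows T. \<forall>(f, \<delta>) \<in> set \<alpha>.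
       \<exists>i < length (fst T). fst T ! i = f \<and> t ! i = \<delta>}"

definition ndt_for :: "nat \<Rightarrow> 'f dtable \<Rightarrow> 'f dtree \<Rightarrow> bool" where
  "ndt_for k T \<Gamma> \<longleftrightarrow> wf_tree k \<Gamma> \<and> tree_attrs \<Gamma> \<subseteq> At T \<and>
     (\<Union>\<xi> \<in> set (tree_paths \<Gamma>). subrows T (fst \<xi>)) = rows T \<and>
     (\<forall>r \<in> set (snd T). \<forall>\<xi> \<in> set (tree_paths \<Gamma>).
        fst r \<in> subrows T (fst \<xi>) \<longrightarrow> snd \<xi> \<in> snd r)"

definition dt_for :: "nat \<Rightarrow> 'f dtable \<Rightarrow> 'f dtree \<Rightarrow> bool" where
  "dt_for k T \<Gamma> \<longleftrightarrow> det_tree \<Gamma> \<and> ndt_for k T \<Gamma>"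

definition tree_cost :: "('f list \<Rightarrow> nat) \<Rightarrow> 'f dtree \<Rightarrow> nat" where
  "tree_cost \<psi> \<Gamma> = Max ((\<lambda>\<xi>. \<psi> (map fst (fst \<xi>))) ` set (tree_paths \<Gamma>))"

definition psi_i :: "('f list \<Rightarrow> nat) \<Rightarrow> 'f dtable \<Rightarrow> nat" where
  "psi_i \<psi> T = \<psi> (fst T)"

definition psi_d :: "nat \<Rightarrow> ('f list \<Rightarrow> nat) \<Rightarrow> 'f dtable \<Rightarrow> nat" where
  "psi_d k \<psi> T = (LEAST m. \<exists>\<Gamma>. dt_for k T \<Gamma> \<and> tree_cost \<psi> \<Gamma> = m)"

definition psi_a :: "nat \<Rightarrow> ('f list \<Rightarrow> nat) \<Rightarrow> 'f dtable \<Rightarrow> nat" where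
  "psi_a k \<psi> T = (LEAST m. \<exists>\<Gamma>. ndt_for k T \<Gamma> \<and> tree_cost \<psi> \<Gamma> = m)"

text \<open>U^{bc}(n) as a partial function (None = undefined).\<close>
definition Ufun :: "'f dtable set \<Rightarrow> ('f dtable \<Rightarrow> nat) \<Rightarrow> ('f dtable \<Rightarrow> nat) \<Rightarrow> nat \<Rightarrow> nat option" where
  "Ufun C \<psi>b \<psi>c n =
     (let S = {\<psi>b T | T. T \<in> C \<and> \<psi>c T \<le> n} in
      if S \<noteq> {} \<and> finite S then Some (Max S) else None)"

datatype ftype = TAlpha | TBeta | TGamma | TDelta | TEpsilon

definition Dom :: "(nat \<Rightarrow> nat option) \<Rightarrow> nat set" where
  "Dom g = {n. g n \<noteq> None}"

definition Dom_plus :: "(nat \<Rightarrow> nat option) \<Rightarrow> nat set" where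
  "Dom_plus g = {n \<in> Dom g. the (g n) \<ge> n}"

definition Dom_minus :: "(nat \<Rightarrow> nat option) \<Rightarrow> nat set" where
  "Dom_minus g = {n \<in> Dom g. the (g n) \<le> n}"

definition bdd_above_pf :: "(nat \<Rightarrow> nat option) \<Rightarrow> bool" where
  "bdd_above_pf g \<longleftrightarrow> (\<exists>B. \<forall>n \<in> Dom g. the (g n) \<le> B)"

definition has_type :: "ftype \<Rightarrow> (nat \<Rightarrow> nat option) \<Rightarrow> bool" where
  "has_type t g = (case t of
      TAlpha \<Rightarrow> infinite (Dom g) \<and> bdd_above_pf g
    | TBeta \<Rightarrow> infinite (Dom g) \<and> finite (Dom_plus g) \<and> \<not> bdd_above_pf g
    | TGamma \<Rightarrow> infinite (Dom_plus g) \<and> infinite (Dom_minus g)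
    | TDelta \<Rightarrow> infinite (Dom g) \<and> finite (Dom_minus g)
    | TEpsilon \<Rightarrow> finite (Dom g))"

definition typ_of :: "(nat \<Rightarrow> nat option) \<Rightarrow> ftype" where
  "typ_of g = (THE t. has_type t g)"

end

theory Submission
  imports Defs
begin

lemma fin_eps: "finite (Dom g) \<Longrightarrow> typ_of g = TEpsilon"
  unfolding typ_of_def
proof (rule the_equality)
  assume f: "finite (Dom g)"
  show "has_type TEpsilon g" using f by (simp add: has_type_def)
  fix t assume h: "has_type t g"
  have "Dom_plus g \<subseteq> Dom g" by (auto simp: Dom_plus_def)
  hence "finite (Dom_plus g)" using f finite_subset by blast
  with h f show "t = TEpsilon" by (cases t) (auto simp: has_type_def)
qed

lemma alpha_typ: assumes "infinite (Dom g)" "bdd_above_pf g" shows "typ_of g = TAlpha"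
  unfolding typ_of_def
proof (rule the_equality)
  show "has_type TAlpha g" using assms by (simp add: has_type_def)
  fix t assume h: "has_type t g"
  obtain B where B: "\<forall>n \<in> Dom g. the (g n) \<le> B" using assms(2) bdd_above_pf_def by blast
  have "Dom_plus g \<subseteq> {..B}" using B by (force simp: Dom_plus_def)
  hence fp: "finite (Dom_plus g)" using finite_subset by blast
  have "Dom g \<subseteq> Dom_plus g \<union> Dom_minus g" by (auto simp: Dom_plus_def Dom_minus_def)
  hence "finite (Dom_minus g) \<Longrightarrow> False" using fp assms(1) finite_subset by blast
  with h fp assms show "t = TAlpha" by (cases t) (auto simp: has_type_def)
qed

definition cst :: "'f dtable \<Rightarrow> 'f dtable" where
  "cst T = (fst T, map (\<lambda>(t, D). (t, {0::nat})) (snd T))"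

lemma cst_in: assumes "closed_class k C" "T \<in> C" shows "cst T \<in> C"
proof -
  obtain as rs where T: "T = (as, rs)" by (cases T)
  have "op_step (as, rs) (as, map (\<lambda>(t, D). (t, {0::nat})) rs)"
    by (rule op_step.change_dec) auto
  hence "op_step\<^sup>*\<^sup>* (as, rs) (as, map (\<lambda>(t, D). (t, {0::nat})) rs)" by blast
  thus ?thesis using assms T unfolding closed_class_def cst_def by auto
qed

lemma cst_subrows: "subrows (cst T) [] = rows (cst T)"
  by (simp add: subrows_def)

lemma cst_ndt: "ndt_for k (cst T) [Term 0]"
  unfolding ndt_for_def wf_tree_def tree_attrs_def tree_paths_def
  by (simp add: cst_subrows) (auto simp: cst_def rows_def)

lemma cst_dt: "dt_for k (cst T) [Term 0]"
  by (simp add: dt_for_def det_tree_def cst_ndt)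

lemma cost0: "tree_cost \<psi> [Term 0] = \<psi> []"
  by (simp add: tree_cost_def tree_paths_def)

lemma cst_psid: "psi_d k \<psi> (cst T) \<le> \<psi> []"
  unfolding psi_d_def using cst_dt cost0 by (metis (mono_tags, lifting) Least_le)

lemma cst_psia: "psi_a k \<psi> (cst T) \<le> \<psi> []"
  unfolding psi_a_def using cst_ndt cost0 by (metis (mono_tags, lifting) Least_le)

lemma cst_psii: "psi_i \<psi> (cst T) = psi_i \<psi> T"
  by (simp add: psi_i_def cst_def)

lemma dom_fin:
  assumes unb: "\<forall>B. \<exists>T\<in>C. psi_i \<psi> T > B"
    and cc: "\<forall>T\<in>C. \<exists>T'\<in>C. psi_i \<psi> T' = psi_i \<psi> T \<and> \<psi>c T' \<le> m"
  shows "finite (Dom (Ufun C (psi_i \<psi>) \<psi>c))"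
proof -
  have "Dom (Ufun C (psi_i \<psi>) \<psi>c) \<subseteq> {..<m}"
  proof
    fix n assume n: "n \<in> Dom (Ufun C (psi_i \<psi>) \<psi>c)"
    show "n \<in> {..<m}"
    proof (rule ccontr)
      assume "n \<notin> {..<m}"
      hence mn: "m \<le> n" by simp
      let ?S = "{psi_i \<psi> T | T. T \<in> C \<and> \<psi>c T \<le> n}"
      have sub: "psi_i \<psi> ` C \<subseteq> ?S"
      proof
        fix x assume "x \<in> psi_i \<psi> ` C"
        then obtain T where "T \<in> C" "x = psi_i \<psi> T" by blast
        with cc mn obtain T' where "T' \<in> C" "psi_i \<psi> T' = x" "\<psi>c T' \<le> n" by fastforce
        thus "x \<in> ?S" by blast
      qed
      have "infinite (psi_i \<psi> ` C)"
      proof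
        assume "finite (psi_i \<psi> ` C)"
        then obtain B where "\<forall>x \<in> psi_i \<psi> ` C. x \<le> B"
          using finite_nat_set_iff_bounded_le by blast
        with unb show False by (meson image_eqI leD)
      qed
      hence "infinite ?S" using sub finite_subset by blast
      hence "Ufun C (psi_i \<psi>) \<psi>c n = None" by (simp add: Ufun_def Let_def)
      with n show False by (simp add: Dom_def)
    qed
  qed
  thus ?thesis using finite_subset by blast
qed

lemma dom_empty: "C = {} \<Longrightarrow> finite (Dom (Ufun C a b))"
  by (simp add: Dom_def Ufun_def)

theorem lemma5:
  fixes k :: nat and C :: "'f dtable set" and \<psi> :: "'f list \<Rightarrow> nat"
  assumes "2 \<le> k"
    and "closed_class k C"
    and "typ_of (Ufun C (psi_i \<psi>) (psi_i \<psi>)) \<noteq> TAlpha"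
  shows "typ_of (Ufun C (psi_i \<psi>) (psi_d k \<psi>)) = TEpsilon
       \<and> typ_of (Ufun C (psi_i \<psi>) (psi_a k \<psi>)) = TEpsilon"
proof (cases "C = {}")
  case True
  then show ?thesis using dom_empty fin_eps by blast
next
  case ne: False
  have unb: "\<forall>B. \<exists>T\<in>C. psi_i \<psi> T > B"
  proof (rule ccontr)
    assume "\<not> ?thesis"
    then obtain B where B: "\<forall>T\<in>C. psi_i \<psi> T \<le> B" by (meson not_le)
    obtain T0 where T0: "T0 \<in> C" using ne by blast
    let ?g = "Ufun C (psi_i \<psi>) (psi_i \<psi>)"
    have fin: "\<And>n. finite {psi_i \<psi> T | T. T \<in> C \<and> psi_i \<psi> T \<le> n}"
      by (rule finite_subset[of _ "{..n}" for n]) auto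
    have "{psi_i \<psi> T0..} \<subseteq> Dom ?g"
    proof
      fix n assume "n \<in> {psi_i \<psi> T0..}"
      hence "{psi_i \<psi> T | T. T \<in> C \<and> psi_i \<psi> T \<le> n} \<noteq> {}" using T0 by blast
      thus "n \<in> Dom ?g" using fin[of n] unfolding Dom_def Ufun_def Let_def by (simp only: mem_Collect_eq if_True simp_thms) simp
    qed
    hence inf: "infinite (Dom ?g)" using infinite_Ici finite_subset by blast
    have "bdd_above_pf ?g" unfolding bdd_above_pf_def
    proof (intro exI ballI)
      fix n assume "n \<in> Dom ?g"
      hence ne2: "{psi_i \<psi> T | T. T \<in> C \<and> psi_i \<psi> T \<le> n} \<noteq> {}"
        by (simp add: Dom_def Ufun_def Let_def split: if_splits) blast
      have "Max {psi_i \<psi> T | T. T \<in> C \<and> psi_i \<psi> T \<le> n} \<le> B"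
        using fin[of n] ne2 B by (subst Max_le_iff) auto
      thus "the (?g n) \<le> B" using fin[of n] ne2 by (simp add: Ufun_def Let_def)
    qed
    with inf alpha_typ assms(3) show False by blast
  qed
  have d: "\<forall>T\<in>C. \<exists>T'\<in>C. psi_i \<psi> T' = psi_i \<psi> T \<and> psi_d k \<psi> T' \<le> \<psi> []"
    using cst_in[OF assms(2)] cst_psii cst_psid by blast
  have a: "\<forall>T\<in>C. \<exists>T'\<in>C. psi_i \<psi> T' = psi_i \<psi> T \<and> psi_a k \<psi> T' \<le> \<psi> []"
    using cst_in[OF assms(2)] cst_psii cst_psia by blast
  show ?thesis using dom_fin[OF unb d] dom_fin[OF unb a] fin_eps by blast
qed

end
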